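(* Let $\widehat{G}$ be a signed bigraph whose underlying bigraph is non-separable, with bipartition $(X,Y)$ and no isolated vertices, and let $x_1,\dots,x_\alpha,y_1,\dots,y_\beta$ be a canonical ordering of $\widehat{G}$. Suppose there are distinct $x_i,x_j,x_k\in X$ and distinct $y_\ell,y_q,y_r\in Y$ with $x_i,x_j\in N(y_1)$ such that, in the subgraph induced by these six vertices, the edges are exactly $x_iy_\ell,x_iy_q,x_iy_r,x_jy_\ell,x_jy_q,x_jy_r,x_ky_r$ (so $x_ky_\ell,x_ky_q$ are non-edges), where $x_iy_\ell$, $x_iy_q$ and $x_jy_r$ are negative (the others of any sign). If no edge of $\widehat{G}$ is signed simplicial, then $\widehat{G}$ contains a graph in $F_3\cup F_4\cup F_5\cup F_6$ as an induced subgraph, where: $F_3$: complete bigraph with parts $\{a_1,a_2\}$, $\{b_1,\dots,b_4\}$, $a_1b_1,a_1b_2,a_2b_3,a_2b_4$ negative, other four edges free; $F_4$: complete bigraph with parts $\{a_1,a_2,a_3\}$, $\{b_1,b_2,b_3\}$, $a_1b_1,a_2b_2,a_3b_3$ negative, other six edges free; $F_5$: bigraph with parts $\{a_1,a_2,a_3\}$, $\{b_1,b_2,b_3\}$ having all nine possible edges except $a_1b_3$, with $a_2b_1,a_3b_2$ negative and the other six edges free; $F_6$: bigraph with parts $\{a_1,\dots,a_4\}$, $\{b_1,\dots,b_4\}$ in which $a_1,a_2$ are adjacent exactly to $b_1,b_2$ and $a_3,a_4$ to all of $b_1,\dots,b_4$, with $a_1b_1,a_2b_1,a_3b_2,a_4b_3,a_4b_4$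 negative and the other seven edges free.
   Context: A signed graph is a finite simple graph each of whose edges is assigned a sign, positive or negative. A signed bigraph is a signed graph whose underlying graph is bipartite. A bigraph is non-separable if it contains no induced $2K_2$. An induced subgraph is obtained by deleting vertices only; $\widehat G$ contains $H$ as an induced subgraph if some induced subgraph is isomorphic to $H$ via a sign-preserving isomorphism. In a bigraph with bipartition $(X,Y)$, a subgraph $H$ is a biclique if every vertex of $V(H)\cap X$ is adjacent to every vertex of $V(H)\cap Y$. For an edge $uv$, $N(uv)=(N(u)\cup N(v))\setminus\{u,v\}$; $uv$ is signed simplicial if $N(uv)$ induces a biclique all of whose edges are positive. A canonical ordering of a non-separable bigraph with $X=\{x_1,\dots,x_\alpha\}$, $Y=\{y_1,\dots,y_\beta\}$ is an ordering with $N(x_1)\supseteq\cdots\supseteq N(x_\alpha)$ and $N(y_1)\subseteq\cdots\subseteq N(y_\beta)$. A family described by a graph with some edges declared negative and the rest declared free is the set of all signed graphs obtained by giving each free edge an arbitrary sign. *)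

theory Defs
  imports Main
begin

text \<open>A signed bigraph: bipartition (X,Y) (vertex set X \<union> Y), a symmetric adjacency
relation E whose edges all go between X and Y, and a symmetric relation neg marking the
negative edges (every other edge is positive).\<close>

definition signed_bigraph ::
  "'v set \<Rightarrow> 'v set \<Rightarrow> ('v \<Rightarrow> 'v \<Rightarrow> bool) \<Rightarrow> ('v \<Rightarrow> 'v \<Rightarrow> bool) \<Rightarrow> bool" where
  "signed_bigraph X Y E neg \<longleftrightarrow>
     finite X \<and> finite Y \<and> X \<inter> Y = {} \<and>
     (\<forall>u v. E u v \<longrightarrow> E v u) \<and>
     (\<forall>u v. E u v \<longrightarrow> (u \<in> X \<and> v \<in> Y) \<or> (u \<in> Y \<and> v \<in> X)) \<and>
     (\<forall>u v. neg u v \<longrightarrow> neg v u) \<and>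
     (\<forall>u v. neg u v \<longrightarrow> E u v)"

definition nbhd :: "('v \<Rightarrow> 'v \<Rightarrow> bool) \<Rightarrow> 'v \<Rightarrow> 'v set" where
  "nbhd E v = {u. E v u}"

definition non_separable :: "'v set \<Rightarrow> 'v set \<Rightarrow> ('v \<Rightarrow> 'v \<Rightarrow> bool) \<Rightarrow> bool" where
  "non_separable X Y E \<longleftrightarrow>
     \<not> (\<exists>x1\<in>X. \<exists>x2\<in>X. \<exists>y1\<in>Y. \<exists>y2\<in>Y. x1 \<noteq> x2 \<and> y1 \<noteq> y2 \<and>
          E x1 y1 \<and> E x2 y2 \<and> \<not> E x1 y2 \<and> \<not> E x2 y1)"

definition no_isolated :: "'v set \<Rightarrow> 'v set \<Rightarrow> ('v \<Rightarrow> 'v \<Rightarrow> bool) \<Rightarrow> bool" where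
  "no_isolated X Y E \<longleftrightarrow> (\<forall>v \<in> X \<union> Y. \<exists>u. E v u)"

text \<open>Canonical ordering: xs = [x_1,...,x_alpha], ys = [y_1,...,y_beta].\<close>
definition canonical_ordering ::
  "'v set \<Rightarrow> 'v set \<Rightarrow> ('v \<Rightarrow> 'v \<Rightarrow> bool) \<Rightarrow> 'v list \<Rightarrow> 'v list \<Rightarrow> bool" where
  "canonical_ordering X Y E xs ys \<longleftrightarrow>
     distinct xs \<and> set xs = X \<and> distinct ys \<and> set ys = Y \<and>
     (\<forall>i. Suc i < length xs \<longrightarrow> nbhd E (xs ! Suc i) \<subseteq> nbhd E (xs ! i)) \<and>
     (\<forall>i. Suc i < length ys \<longrightarrow> nbhd E (ys ! i) \<subseteq> nbhd E (ys ! Suc i))"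

definition edge_nbhd :: "('v \<Rightarrow> 'v \<Rightarrow> bool) \<Rightarrow> 'v \<Rightarrow> 'v \<Rightarrow> 'v set" where
  "edge_nbhd E u v = (nbhd E u \<union> nbhd E v) - {u, v}"

definition signed_simplicial ::
  "'v set \<Rightarrow> 'v set \<Rightarrow> ('v \<Rightarrow> 'v \<Rightarrow> bool) \<Rightarrow> ('v \<Rightarrow> 'v \<Rightarrow> bool) \<Rightarrow> 'v \<Rightarrow> 'v \<Rightarrow> bool" where
  "signed_simplicial X Y E neg u v \<longleftrightarrow>
     (\<forall>a \<in> edge_nbhd E u v \<inter> X. \<forall>b \<in> edge_nbhd E u v \<inter> Y. E a b \<and> \<not> neg a b)"

text \<open>The signed graph contains, as an induced subgraph, some member of the family given by a
bigraph pattern with parts {a_1..a_p}, {b_1..b_q}, edge set PE (pairs (i,j) meaning a_i b_j),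
negative edges PN (a subset of PE) and all remaining edges free.  Since free edges may receive
any sign, this amounts to an injective vertex map that preserves adjacency and non-adjacency
exactly and sends the declared negative edges to negative edges.\<close>
definition contains_family ::
  "'v set \<Rightarrow> ('v \<Rightarrow> 'v \<Rightarrow> bool) \<Rightarrow> ('v \<Rightarrow> 'v \<Rightarrow> bool) \<Rightarrow> nat \<Rightarrow> nat \<Rightarrow>
   (nat \<Rightarrow> nat \<Rightarrow> bool) \<Rightarrow> (nat \<Rightarrow> nat \<Rightarrow> bool) \<Rightarrow> bool" where
  "contains_family V E neg p q PE PN \<longleftrightarrow>
     (\<exists>a b. inj_on a {1..p} \<and> inj_on b {1..q} \<and> a ` {1..p} \<inter> b ` {1..q} = {} \<and>
        a ` {1..p} \<subseteq> V \<and> b ` {1..q} \<subseteq> V \<and>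
        (\<forall>i\<in>{1..p}. \<forall>i'\<in>{1..p}. \<not> E (a i) (a i')) \<and>
        (\<forall>j\<in>{1..q}. \<forall>j'\<in>{1..q}. \<not> E (b j) (b j')) \<and>
        (\<forall>i\<in>{1..p}. \<forall>j\<in>{1..q}. (E (a i) (b j) \<longleftrightarrow> PE i j) \<and> (PN i j \<longrightarrow> neg (a i) (b j))))"

definition F3_E :: "nat \<Rightarrow> nat \<Rightarrow> bool" where "F3_E i j = True"
definition F3_N :: "nat \<Rightarrow> nat \<Rightarrow> bool" where
  "F3_N i j \<longleftrightarrow> (i, j) \<in> {(1,1), (1,2), (2,3), (2,4)}"

definition F4_E :: "nat \<Rightarrow> nat \<Rightarrow> bool" where "F4_E i j = True"
definition F4_N :: "nat \<Rightarrow> nat \<Rightarrow> bool" where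
  "F4_N i j \<longleftrightarrow> (i, j) \<in> {(1,1), (2,2), (3,3)}"

definition F5_E :: "nat \<Rightarrow> nat \<Rightarrow> bool" where "F5_E i j \<longleftrightarrow> (i, j) \<noteq> (1, 3)"
definition F5_N :: "nat \<Rightarrow> nat \<Rightarrow> bool" where
  "F5_N i j \<longleftrightarrow> (i, j) \<in> {(2,1), (3,2)}"

definition F6_E :: "nat \<Rightarrow> nat \<Rightarrow> bool" where
  "F6_E i j \<longleftrightarrow> (i \<in> {1,2} \<and> j \<in> {1,2}) \<or> i \<in> {3,4}"
definition F6_N :: "nat \<Rightarrow> nat \<Rightarrow> bool" where
  "F6_N i j \<longleftrightarrow> (i, j) \<in> {(1,1), (2,1), (3,2), (4,3), (4,4)}"

end

theory Submission imports Defs begin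

lemma sb_noE:
  assumes "signed_bigraph X Y E neg"
  shows "\<forall>u\<in>X. \<forall>v\<in>X. \<not> E u v" "\<forall>u\<in>Y. \<forall>v\<in>Y. \<not> E u v"
  using assms unfolding signed_bigraph_def by blast+

lemma F3I:
  assumes G: "signed_bigraph X Y E neg"
    and "xa \<in> X" "xb \<in> X" "ya \<in> Y" "yb \<in> Y" "yc \<in> Y" "yd \<in> Y"
    and "xa \<noteq> xb" "ya \<noteq> yb" "ya \<noteq> yc" "ya \<noteq> yd" "yb \<noteq> yc" "yb \<noteq> yd" "yc \<noteq> yd"
    and "E xa ya" "E xa yb" "E xa yc" "E xa yd" "E xb ya" "E xb yb" "E xb yc" "E xb yd"
    and "neg xa ya" "neg xa yb" "neg xb yc" "neg xb yd"
  shows "contains_family (X \<union> Y) E neg 2 4 F3_E F3_N"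
proof -
  have s: "{1..2::nat} = {1,2}" "{1..4::nat} = {1,2,3,4}" by auto
  have d: "X \<inter> Y = {}" using G unfolding signed_bigraph_def by blast
  show ?thesis unfolding contains_family_def
    apply (rule exI[of _ "\<lambda>i. if i = 1 then xa else xb"])
    apply (rule exI[of _ "\<lambda>j. if j = 1 then ya else if j = 2 then yb else if j = 3 then yc else yd"])
    using assms sb_noE[OF G] d by (auto simp: s F3_E_def F3_N_def inj_on_def)
qed

lemma F4I:
  assumes G: "signed_bigraph X Y E neg"
    and "xa \<in> X" "xb \<in> X" "xc \<in> X" "ya \<in> Y" "yb \<in> Y" "yc \<in> Y"
    and "xa \<noteq> xb" "xa \<noteq> xc" "xb \<noteq> xc" "ya \<noteq> yb" "ya \<noteq> yc" "yb \<noteq> yc"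
    and "E xa ya" "E xa yb" "E xa yc" "E xb ya" "E xb yb" "E xb yc" "E xc ya" "E xc yb" "E xc yc"
    and "neg xa ya" "neg xb yb" "neg xc yc"
  shows "contains_family (X \<union> Y) E neg 3 3 F4_E F4_N"
proof -
  have s: "{1..3::nat} = {1,2,3}" by auto
  have d: "X \<inter> Y = {}" using G unfolding signed_bigraph_def by blast
  show ?thesis unfolding contains_family_def
    apply (rule exI[of _ "\<lambda>i. if i = 1 then xa else if i = 2 then xb else xc"])
    apply (rule exI[of _ "\<lambda>j. if j = 1 then ya else if j = 2 then yb else yc"])
    using assms sb_noE[OF G] d by (auto simp: s F4_E_def F4_N_def inj_on_def)
qed

lemma F5I:
  assumes G: "signed_bigraph X Y E neg"
    and "xa \<in> X" "xb \<in> X" "xc \<in> X" "ya \<in> Y" "yb \<in> Y" "yc \<in> Y"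
    and "xa \<noteq> xb" "xa \<noteq> xc" "xb \<noteq> xc" "ya \<noteq> yb" "ya \<noteq> yc" "yb \<noteq> yc"
    and "E xa ya" "E xa yb" "\<not> E xa yc" "E xb ya" "E xb yb" "E xb yc" "E xc ya" "E xc yb" "E xc yc"
    and "neg xb ya" "neg xc yb"
  shows "contains_family (X \<union> Y) E neg 3 3 F5_E F5_N"
proof -
  have s: "{1..3::nat} = {1,2,3}" by auto
  have d: "X \<inter> Y = {}" using G unfolding signed_bigraph_def by blast
  show ?thesis unfolding contains_family_def
    apply (rule exI[of _ "\<lambda>i. if i = 1 then xa else if i = 2 then xb else xc"])
    apply (rule exI[of _ "\<lambda>j. if j = 1 then ya else if j = 2 then yb else yc"])
    using assms sb_noE[OF G] d by (auto simp: s F5_E_def F5_N_def inj_on_def)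
qed

lemma F6I:
  assumes G: "signed_bigraph X Y E neg"
    and "xa \<in> X" "xb \<in> X" "xc \<in> X" "xd \<in> X" "ya \<in> Y" "yb \<in> Y" "yc \<in> Y" "yd \<in> Y"
    and "xa \<noteq> xb" "xa \<noteq> xc" "xa \<noteq> xd" "xb \<noteq> xc" "xb \<noteq> xd" "xc \<noteq> xd"
    and "ya \<noteq> yb" "ya \<noteq> yc" "ya \<noteq> yd" "yb \<noteq> yc" "yb \<noteq> yd" "yc \<noteq> yd"
    and "E xa ya" "E xa yb" "\<not> E xa yc" "\<not> E xa yd"
    and "E xb ya" "E xb yb" "\<not> E xb yc" "\<not> E xb yd"
    and "E xc ya" "E xc yb" "E xc yc" "E xc yd"
    and "E xd ya" "E xd yb" "E xd yc" "E xd yd"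
    and "neg xa ya" "neg xb ya" "neg xc yb" "neg xd yc" "neg xd yd"
  shows "contains_family (X \<union> Y) E neg 4 4 F6_E F6_N"
proof -
  have s: "{1..4::nat} = {1,2,3,4}" by auto
  have d: "X \<inter> Y = {}" using G unfolding signed_bigraph_def by blast
  show ?thesis unfolding contains_family_def
    apply (rule exI[of _ "\<lambda>i. if i = 1 then xa else if i = 2 then xb else if i = 3 then xc else xd"])
    apply (rule exI[of _ "\<lambda>j. if j = 1 then ya else if j = 2 then yb else if j = 3 then yc else yd"])
    using assms sb_noE[OF G] d by (auto simp: s F6_E_def F6_N_def inj_on_def)
qed

theorem lemma3p4:
  fixes X Y :: "'v set" and E neg :: "'v \<Rightarrow> 'v \<Rightarrow> bool"
    and xs ys :: "'v list" and xi xj xk yl yq yr :: 'v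
  assumes G: "signed_bigraph X Y E neg"
    and nonsep: "non_separable X Y E"
    and noiso: "no_isolated X Y E"
    and canon: "canonical_ordering X Y E xs ys"
    and xX: "xi \<in> X" "xj \<in> X" "xk \<in> X"
    and xdist: "xi \<noteq> xj" "xi \<noteq> xk" "xj \<noteq> xk"
    and yY: "yl \<in> Y" "yq \<in> Y" "yr \<in> Y"
    and ydist: "yl \<noteq> yq" "yl \<noteq> yr" "yq \<noteq> yr"
    and y1: "xi \<in> nbhd E (ys ! 0)" "xj \<in> nbhd E (ys ! 0)"
    and edges: "E xi yl" "E xi yq" "E xi yr" "E xj yl" "E xj yq" "E xj yr" "E xk yr"
    and nonedges: "\<not> E xk yl" "\<not> E xk yq"
    and negs: "neg xi yl" "neg xi yq" "neg xj yr"
    and nosimp: "\<forall>u v. E u v \<longrightarrow> \<not> signed_simplicial X Y E neg u v"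
  shows "contains_family (X \<union> Y) E neg 2 4 F3_E F3_N \<or>
         contains_family (X \<union> Y) E neg 3 3 F4_E F4_N \<or>
         contains_family (X \<union> Y) E neg 3 3 F5_E F5_N \<or>
         contains_family (X \<union> Y) E neg 4 4 F6_E F6_N"
proof -
  have fin: "finite X" "finite Y" and disj: "X \<inter> Y = {}"
    and Esym: "\<And>u v. E u v \<Longrightarrow> E v u"
    and Ebip: "\<And>u v. E u v \<Longrightarrow> (u\<in>X \<and> v\<in>Y) \<or> (u\<in>Y \<and> v\<in>X)"
    using G unfolding signed_bigraph_def by blast+
  have EXY: "v \<in> Y" if "E u v" "u \<in> X" for u v using Ebip disj that by blast
  have EYX: "v \<in> X" if "E u v" "u \<in> Y" for u v using Ebip disj that by blast
  have nbY: "nbhd E x \<subseteq> Y" if "x \<in> X" for x using EXY that by (auto simp: nbhd_def)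
  have nbX: "nbhd E y \<subseteq> X" if "y \<in> Y" for y using EYX that by (auto simp: nbhd_def)
  have chain: "nbhd E x \<subseteq> nbhd E x' \<or> nbhd E x' \<subseteq> nbhd E x" if xX': "x\<in>X" "x'\<in>X" for x x'
  proof (rule ccontr)
    assume nc: "\<not> (nbhd E x \<subseteq> nbhd E x' \<or> nbhd E x' \<subseteq> nbhd E x)"
    then obtain y y' where yy: "E x y" "\<not>E x' y" "E x' y'" "\<not> E x y'" by (auto simp: nbhd_def)
    then have "x \<noteq> x'" "y \<noteq> y'" "y\<in>Y" "y'\<in>Y" using EXY xX' by auto
    then show False using nonsep yy xX' unfolding non_separable_def by blast
  qed
  have cl: "distinct ys" "set ys = Y"
    "\<And>i. Suc i < length ys \<Longrightarrow> nbhd E (ys ! i) \<subseteq> nbhd E (ys ! Suc i)"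
    using canon unfolding canonical_ordering_def by auto
  have ys0: "nbhd E (ys!0) \<subseteq> nbhd E (ys!n)" if "n < length ys" for n
    using that
  proof (induction n)
    case 0 then show ?case by simp
  next
    case (Suc n) then show ?case using cl(3)[of n] by auto
  qed
  have univ: "E xi y \<and> E xj y" if "y \<in> Y" for y
  proof -
    have "y \<in> set ys" using that cl(2) by simp
    then obtain n where "n < length ys" "ys ! n = y" by (auto simp: in_set_conv_nth)
    then show ?thesis using ys0 y1 Esym by (auto simp: nbhd_def)
  qed
  define mini where "mini x \<longleftrightarrow> x \<in> X \<and> E x yr \<and> (\<forall>z\<in>X. E z yr \<longrightarrow> nbhd E x \<subseteq> nbhd E z)" for x
  have "\<exists>x. (x\<in>X \<and> E x yr) \<and> (\<forall>z. (z\<in>X \<and> E z yr) \<longrightarrow> card (nbhd E x) \<le> card (nbhd E z))"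
    by (rule ex_has_least_nat[of _ xk]) (use xX edges in auto)
  then obtain x0 where x0: "x0 \<in> X" "E x0 yr"
    and x0m: "\<And>z. z\<in>X \<Longrightarrow> E z yr \<Longrightarrow> card (nbhd E x0) \<le> card (nbhd E z)" by blast
  have mx0: "mini x0" unfolding mini_def
  proof (intro conjI ballI impI x0)
    fix z assume z: "z \<in> X" "E z yr"
    show "nbhd E x0 \<subseteq> nbhd E z"
    proof (cases "nbhd E z \<subseteq> nbhd E x0")
      case True
      have "finite (nbhd E x0)" using nbY[OF x0(1)] fin finite_subset by blast
      then have "nbhd E z = nbhd E x0" using card_seteq True x0m[OF z] by blast
      then show ?thesis by simp
    qed (use chain[OF x0(1) z(1)] in auto)
  qed
  have step: "\<exists>x1 y1. x1\<in>X \<and> E x1 yr \<and> x1 \<noteq> x0' \<and> E x0' y1 \<and> y1 \<in> Y \<and> y1 \<noteq> yr \<and> neg x1 y1"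
    if m: "mini x0'" for x0'
  proof -
    have x0': "x0' \<in> X" "E x0' yr" "\<And>z. z\<in>X \<Longrightarrow> E z yr \<Longrightarrow> nbhd E x0' \<subseteq> nbhd E z"
      using m unfolding mini_def by auto
    have "\<not> signed_simplicial X Y E neg x0' yr" using nosimp x0' by blast
    then obtain a b where a: "a \<in> edge_nbhd E x0' yr" "a \<in> X" and b: "b \<in> edge_nbhd E x0' yr" "b \<in> Y"
      and nab: "\<not> (E a b \<and> \<not> neg a b)"
      unfolding signed_simplicial_def by blast
    have "a \<notin> nbhd E x0'" using nbY[OF x0'(1)] a(2) disj by blast
    then have xb: "E yr a" "a \<noteq> x0'" using a unfolding edge_nbhd_def nbhd_def by auto
    have "b \<notin> nbhd E yr" using nbX[OF yY(3)] b(2) disj by blast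
    then have yb: "E x0' b" "b \<noteq> yr" using b unfolding edge_nbhd_def nbhd_def by auto
    have "E a yr" using Esym xb by blast
    then have "E a b" using x0'(3)[OF a(2)] yb by (auto simp: nbhd_def)
    then have "neg a b" using nab by blast
    then show ?thesis using xb yb a b \<open>E a yr\<close> by blast
  qed
  have cls: "?thesis \<or> (\<not>E x1 yl \<and> \<not>E x1 yq \<and> nbhd E x1 = nbhd E x0')"
    if m: "mini x0'" and h: "x1\<in>X" "E x1 yr" "x1 \<noteq> x0'" "E x0' y1" "y1\<in>Y" "y1\<noteq>yr" "neg x1 y1"
    for x0' x1 y1
  proof -
    have x0': "x0' \<in> X" "E x0' yr" "\<And>z. z\<in>X \<Longrightarrow> E z yr \<Longrightarrow> nbhd E x0' \<subseteq> nbhd E z"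
      using m unfolding mini_def by auto
    have sub: "nbhd E x0' \<subseteq> nbhd E x1" using x0'(3) h by blast
    have "nbhd E x0' \<subseteq> nbhd E xk" using x0'(3) xX edges by blast
    then have n0: "\<not> E x0' yl" "\<not> E x0' yq" using nonedges by (auto simp: nbhd_def)
    have e11: "E x1 y1" using sub h by (auto simp: nbhd_def)
    have d1: "y1 \<noteq> yl" "y1 \<noteq> yq" using n0 h by auto
    have d0: "x0' \<noteq> xi" "x0' \<noteq> xj" using n0 edges by auto
    have U: "E xi yl" "E xi yq" "E xi yr" "E xi y1" "E xj yl" "E xj yq" "E xj yr" "E xj y1"
      using univ yY h by auto
    show ?thesis
    proof (cases "x1 = xj")
      case True
      have "contains_family (X \<union> Y) E neg 2 4 F3_E F3_N"
        by (rule F3I[where xa=xi and xb=xj and ya=yl and yb=yq and yc=yr and yd=y1])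
           (use G xX yY xdist ydist d1 h U negs True in auto)
      then show ?thesis by blast
    next
      case nj: False
      show ?thesis
      proof (cases "x1 = xi")
        case True
        have "contains_family (X \<union> Y) E neg 3 3 F5_E F5_N"
          by (rule F5I[where xa=x0' and xb=xj and xc=xi and ya=yr and yb=y1 and yc=yl])
             (use G xX yY xdist ydist d1 d0 h U negs True n0 x0' in auto)
        then show ?thesis by blast
      next
        case ni: False
        show ?thesis
        proof (cases "E x1 yl")
          case l: True
          show ?thesis
          proof (cases "E x1 yq")
            case True
            have "contains_family (X \<union> Y) E neg 3 3 F4_E F4_N"
              by (rule F4I[where xa=xi and xb=xj and xc=x1 and ya=yl and yb=yr and yc=y1])
                 (use G xX yY xdist ydist d1 d0 h U negs True l ni nj e11 in auto)
            then show ?thesis by blast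
          next
            case False
            have "contains_family (X \<union> Y) E neg 3 3 F5_E F5_N"
              by (rule F5I[where xa=x1 and xb=xj and xc=xi and ya=yr and yb=yl and yc=yq])
                 (use G xX yY xdist ydist d1 d0 h U negs False l ni nj e11 in auto)
            then show ?thesis by blast
          qed
        next
          case nl: False
          show ?thesis
          proof (cases "E x1 yq")
            case True
            have "contains_family (X \<union> Y) E neg 3 3 F5_E F5_N"
              by (rule F5I[where xa=x1 and xb=xj and xc=xi and ya=yr and yb=yq and yc=yl])
                 (use G xX yY xdist ydist d1 d0 h U negs True nl ni nj e11 in auto)
            then show ?thesis by blast
          next
            case nq: False
            show ?thesis
            proof (cases "nbhd E x1 = nbhd E x0'")
              case True then show ?thesis using nl nq by blast
            next
              case False
              then obtain w where w: "E x1 w" "\<not> E x0' w" using sub by (auto simp: nbhd_def)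
              have wY: "w \<in> Y" using EXY w h by blast
              have "w \<noteq> yr" "w \<noteq> y1" using w x0' h by auto
              then have "contains_family (X \<union> Y) E neg 3 3 F5_E F5_N"
                by (rule_tac F5I[where xa=x0' and xb=xj and xc=x1 and ya=yr and yb=y1 and yc=w])
                   (use G xX yY xdist ydist d1 d0 h U negs nl ni nj e11 wY w x0' univ in auto)
              then show ?thesis by blast
            qed
          qed
        qed
      qed
    qed
  qed
  obtain x1 y1 where s1: "x1\<in>X" "E x1 yr" "x1 \<noteq> x0" "E x0 y1" "y1 \<in> Y" "y1 \<noteq> yr" "neg x1 y1"
    using step[OF mx0] by blast
  note c1 = cls[OF mx0 s1]
  show ?thesis
  proof (cases ?thesis)
    case False
    then have x1p: "\<not>E x1 yl" "\<not>E x1 yq" "nbhd E x1 = nbhd E x0" using c1 by blast+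
    have mx1: "mini x1" using mx0 s1 x1p unfolding mini_def by auto
    obtain x2 y2 where s2: "x2\<in>X" "E x2 yr" "x2 \<noteq> x1" "E x1 y2" "y2 \<in> Y" "y2 \<noteq> yr" "neg x2 y2"
      using step[OF mx1] by blast
    have x2p: "\<not>E x2 yl" "\<not>E x2 yq" "nbhd E x2 = nbhd E x1" using cls[OF mx1 s2] False by blast+
    have e: "E x1 y1" "E x2 y1" "E x2 y2" using x1p x2p s1 s2 by (auto simp: nbhd_def)
    have dx: "x1 \<noteq> xi" "x1 \<noteq> xj" "x2 \<noteq> xi" "x2 \<noteq> xj" using x1p x2p edges by auto
    have dy: "y1 \<noteq> yl" "y1 \<noteq> yq" using x1p e by auto
    have U: "E xi yl" "E xi yq" "E xi yr" "E xi y1" "E xj yl" "E xj yq" "E xj yr" "E xj y1"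
       "E xj y2"
      using univ yY s1 s2 by auto
    show ?thesis
    proof (cases "y2 = y1")
      case True
      have "contains_family (X \<union> Y) E neg 4 4 F6_E F6_N"
        by (rule F6I[where xa=x1 and xb=x2 and xc=xj and xd=xi and ya=y1 and yb=yr and yc=yl and yd=yq])
           (use G xX yY xdist ydist dx dy s1 s2 x1p x2p e U negs True in auto)
      then show ?thesis by blast
    next
      case ne: False
      have "contains_family (X \<union> Y) E neg 3 3 F4_E F4_N"
        by (rule F4I[where xa=x1 and xb=x2 and xc=xj and ya=y1 and yb=y2 and yc=yr])
           (use G xX yY xdist ydist dx dy s1 s2 x1p x2p e U negs ne in auto)
      then show ?thesis by blast
    qed
  qed
qed

end
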